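(* Let $C$ be a linear completely regular $[n,k,2]_q$ code with covering radius $\rho=1$ and $k<n-1$, and let $n_a$ be the number of codewords at distance one from any vector not in $C$. Let $X_1,\dots,X_{n/n_a}$ be a partition of the coordinate set $\{1,\dots,n\}$ into sets of size $n_a$ such that the support of every weight-2 codeword of $C$ is contained in one of the $X_j$. For each $j$, fix a coordinate $i_j\in X_j$, let $I=\{i_1,\dots,i_{n/n_a}\}$, let $D'$ be the set of codewords of $C$ whose support is contained in $I$, and let $D$ be the code obtained from $D'$ by deleting all coordinates outside $I$. Then $n/n_a\ge 3$ and $D$ is a $q$-ary Hamming code of length $n/n_a$.
   Context: $\mathbb{F}_q$ is the finite field with $q$ elements; the support of a vector is its set of nonzero coordinates; Hamming distance; covering radius $\rho=\max_{\bf v}\min_{{\bf x}\in C}d({\bf v},{\bf x})$. $C$ is completely regular if for every vector ${\bf x}$, with $t=d({\bf x},C)$, the number of codewords at distance $i$ from ${\bf x}$ depends only on $t$ and $i$. For $m\ge 2$ a $q$-ary Hamming code of length $(q^m-1)/(q-1)$ is a linear code with an $m\times (q^m-1)/(q-1)$ parity-check matrix whose columns are nonzero and pairwise linearly independent. *)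

theory Defs
  imports Main "HOL-Library.Cardinality"
begin

text \<open>Vectors over a finite field 'a are functions nat => 'a; a word with
coordinate set S is a function vanishing outside S.  The ambient space
F_q^n uses the coordinate set {1..n}.\<close>

definition words :: "nat set \<Rightarrow> (nat \<Rightarrow> 'a::zero) set" where
  "words S = {v. \<forall>i. i \<notin> S \<longrightarrow> v i = 0}"

definition supp :: "(nat \<Rightarrow> 'a::zero) \<Rightarrow> nat set" where
  "supp v = {i. v i \<noteq> 0}"

definition hdist :: "(nat \<Rightarrow> 'a) \<Rightarrow> (nat \<Rightarrow> 'a) \<Rightarrow> nat" where
  "hdist x y = card {i. x i \<noteq> y i}"

definition wt :: "(nat \<Rightarrow> 'a::zero) \<Rightarrow> nat" where
  "wt v = card (supp v)"

definition linear_code :: "nat \<Rightarrow> (nat \<Rightarrow> 'a::field) set \<Rightarrow> bool" where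
  "linear_code n C \<longleftrightarrow> C \<subseteq> words {1..n} \<and> (\<lambda>i. 0) \<in> C \<and>
     (\<forall>x\<in>C. \<forall>y\<in>C. (\<lambda>i. x i + y i) \<in> C) \<and>
     (\<forall>c. \<forall>x\<in>C. (\<lambda>i. c * x i) \<in> C)"

definition min_dist_eq :: "(nat \<Rightarrow> 'a) set \<Rightarrow> nat \<Rightarrow> bool" where
  "min_dist_eq C d \<longleftrightarrow> (\<exists>x\<in>C. \<exists>y\<in>C. x \<noteq> y \<and> hdist x y = d) \<and>
     (\<forall>x\<in>C. \<forall>y\<in>C. x \<noteq> y \<longrightarrow> d \<le> hdist x y)"

definition dist_code :: "(nat \<Rightarrow> 'a) \<Rightarrow> (nat \<Rightarrow> 'a) set \<Rightarrow> nat" where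
  "dist_code x C = Min ((\<lambda>c. hdist x c) ` C)"

definition covering_radius :: "nat \<Rightarrow> (nat \<Rightarrow> 'a::zero) set \<Rightarrow> nat" where
  "covering_radius n C = Max ((\<lambda>v. dist_code v C) ` words {1..n})"

definition completely_regular :: "nat \<Rightarrow> (nat \<Rightarrow> 'a::zero) set \<Rightarrow> bool" where
  "completely_regular n C \<longleftrightarrow>
     (\<forall>x\<in>words {1..n}. \<forall>y\<in>words {1..n}. dist_code x C = dist_code y C \<longrightarrow>
        (\<forall>i. card {c\<in>C. hdist x c = i} = card {c\<in>C. hdist y c = i}))"

definition hamming_code :: "nat set \<Rightarrow> (nat \<Rightarrow> 'a::{finite,field}) set \<Rightarrow> bool" where
  "hamming_code I D \<longleftrightarrow> finite I \<and> (\<exists>r::nat. r \<ge> 2 \<and>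
     card I = (CARD('a) ^ r - 1) div (CARD('a) - 1) \<and>
     (\<exists>H :: nat \<Rightarrow> nat \<Rightarrow> 'a.
        (\<forall>j\<in>I. \<exists>s<r. H s j \<noteq> 0) \<and>
        (\<forall>j\<in>I. \<forall>j'\<in>I. j \<noteq> j' \<longrightarrow>
           (\<forall>a b. (\<forall>s<r. a * H s j + b * H s j' = 0) \<longrightarrow> a = 0 \<and> b = 0)) \<and>
        D = {v \<in> words I. \<forall>s<r. (\<Sum>t\<in>I. H s t * v t) = 0}))"

end

theory Submission imports Defs "HOL-Library.FuncSet" begin

lemma card_words:
  assumes "finite J"
  shows "card (words J :: (nat \<Rightarrow> 'a::{finite,zero}) set) = CARD('a) ^ card J"
proof -
  have "bij_betw (\<lambda>f. restrict f J) (words J :: (nat \<Rightarrow> 'a) set) (PiE J (\<lambda>_. UNIV))"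
    by (rule bij_betw_byWitness[where f'="\<lambda>g i. if i \<in> J then g i else 0"])
       (auto simp: words_def restrict_def PiE_def extensional_def fun_eq_iff)
  then have "card (words J :: (nat \<Rightarrow> 'a) set) = card (PiE J (\<lambda>_. (UNIV::'a set)))"
    by (rule bij_betw_same_card)
  also have "\<dots> = CARD('a) ^ card J" using assms by (simp add: card_PiE)
  finally show ?thesis .
qed

lemma lc_zero: "linear_code n C \<Longrightarrow> (\<lambda>i. 0) \<in> C"
  by (simp add: linear_code_def)
lemma lc_add: "linear_code n C \<Longrightarrow> x \<in> C \<Longrightarrow> y \<in> C \<Longrightarrow> (\<lambda>i. x i + y i) \<in> C"
  by (simp add: linear_code_def)
lemma lc_smult: "linear_code n C \<Longrightarrow> x \<in> C \<Longrightarrow> (\<lambda>i. c * x i) \<in> C"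
  by (simp add: linear_code_def)
lemma lc_words: "linear_code n C \<Longrightarrow> x \<in> C \<Longrightarrow> x \<in> words {1..n}"
  by (auto simp: linear_code_def)
lemma lc_lincomb: "linear_code n C \<Longrightarrow> x \<in> C \<Longrightarrow> y \<in> C \<Longrightarrow> (\<lambda>i. x i + c * y i) \<in> C"
  using lc_add lc_smult by (metis (no_types))
lemma lc_diff: "linear_code n C \<Longrightarrow> x \<in> C \<Longrightarrow> y \<in> C \<Longrightarrow> (\<lambda>i. x i - y i) \<in> C"
  using lc_lincomb[of n C x y "-1"] by simp

lemma lc_sum:
  assumes "linear_code n C" "\<forall>j\<in>S. f j \<in> C"
  shows "(\<lambda>i. \<Sum>j\<in>S. g j * f j i) \<in> C"
proof (cases "finite S")
  case True
  then show ?thesis using assms(2)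
  proof (induction S rule: finite_induct)
    case empty then show ?case using lc_zero[OF assms(1)] by simp
  next
    case (insert x F)
    then have "(\<lambda>i. (\<Sum>j\<in>F. g j * f j i) + g x * f x i) \<in> C"
      using lc_lincomb[OF assms(1)] by blast
    then show ?case using insert by (simp add: add.commute)
  qed
next
  case False then show ?thesis using lc_zero[OF assms(1)] by simp
qed

lemma info_set:
  assumes lin: "linear_code n (C :: (nat \<Rightarrow> 'a::field) set)"
  shows "\<exists>J. J \<subseteq> {1..n} \<and> (\<forall>w. \<exists>c\<in>C. \<forall>i\<in>J. c i = w i) \<and>
             (\<forall>c\<in>C. (\<forall>i\<in>J. c i = 0) \<longrightarrow> (\<forall>i. c i = 0))"
proof -
  define SS where "SS = {J. J \<subseteq> {1..n} \<and> (\<forall>w. \<exists>c\<in>C. \<forall>i\<in>J. c i = w i)}"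
  have fin: "finite SS" unfolding SS_def by (rule finite_subset[of _ "Pow {1..n}"]) auto
  have ne: "{} \<in> SS" unfolding SS_def using lc_zero[OF lin] by auto
  obtain J where J: "J \<in> SS" "card J = Max (card ` SS)"
  proof -
    have "Max (card ` SS) \<in> card ` SS" using fin ne by (intro Max_in) auto
    then show ?thesis using that by (metis imageE)
  qed
  have finJ: "finite J" using J(1) unfolding SS_def by (metis (mono_tags) finite_atLeastAtMost finite_subset mem_Collect_eq)
  have "\<forall>c\<in>C. (\<forall>i\<in>J. c i = 0) \<longrightarrow> (\<forall>i. c i = 0)"
  proof (intro ballI impI allI, rule ccontr)
    fix c t assume c: "c \<in> C" "\<forall>i\<in>J. c i = 0" "c t \<noteq> 0"
    have tn: "t \<in> {1..n}" using lc_words[OF lin c(1)] c(3) by (auto simp: words_def)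
    have tJ: "t \<notin> J" using c by auto
    have "insert t J \<in> SS"
      unfolding SS_def
    proof (intro CollectI conjI allI)
      show "insert t J \<subseteq> {1..n}" using J(1) tn unfolding SS_def by auto
    next
      fix w :: "nat \<Rightarrow> 'a"
      obtain c' where c': "c' \<in> C" "\<forall>i\<in>J. c' i = w i" using J(1) unfolding SS_def by blast
      let ?c = "\<lambda>i. c' i + ((w t - c' t) / c t) * c i"
      have "?c \<in> C" using lc_lincomb[OF lin c'(1) c(1)] .
      moreover have "\<forall>i\<in>insert t J. ?c i = w i"
      proof
        fix i assume "i \<in> insert t J"
        then show "?c i = w i"
        proof
          assume "i = t" then show ?thesis using c(3) by simp
        next
          assume "i \<in> J" then show ?thesis using c(2) c'(2) by simp
        qed
      qed
      ultimately show "\<exists>c\<in>C. \<forall>i\<in>insert t J. c i = w i" by (metis (no_types, lifting))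
    qed
    then have "card (insert t J) \<le> Max (card ` SS)" using fin by (intro Max_ge) simp_all
    then show False using J(2) finJ tJ by simp
  qed
  then show ?thesis using J(1) unfolding SS_def by blast
qed



theorem proposition3p9:
  fixes C :: "(nat \<Rightarrow> 'a::{finite,field}) set"
    and n k na m :: nat
    and X :: "nat \<Rightarrow> nat set"
    and ii :: "nat \<Rightarrow> nat"
  assumes lin: "linear_code n C"
    and dim: "card C = CARD('a) ^ k"
    and md: "min_dist_eq C 2"
    and cr: "completely_regular n C"
    and rho: "covering_radius n C = 1"
    and kn: "k < n - 1"
    and na: "\<forall>v \<in> words {1..n} - C. card {c\<in>C. hdist v c = 1} = na"
    and nm: "n = m * na"
    and Xsub: "\<forall>j\<in>{1..m}. X j \<subseteq> {1..n} \<and> card (X j) = na"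
    and Xdisj: "\<forall>j\<in>{1..m}. \<forall>j'\<in>{1..m}. j \<noteq> j' \<longrightarrow> X j \<inter> X j' = {}"
    and Xcov: "(\<Union>j\<in>{1..m}. X j) = {1..n}"
    and w2: "\<forall>c\<in>C. wt c = 2 \<longrightarrow> (\<exists>j\<in>{1..m}. supp c \<subseteq> X j)"
    and ii: "\<forall>j\<in>{1..m}. ii j \<in> X j"
  shows "m \<ge> 3 \<and> card (ii ` {1..m}) = m \<and>
         hamming_code (ii ` {1..m}) {c \<in> C. supp c \<subseteq> ii ` {1..m}}"
proof -
  define q where "q = CARD('a)"
  have q2: "q \<ge> 2"
  proof -
    have "card {0::'a, 1} = 2" by simp
    moreover have "card {0::'a,1} \<le> card (UNIV::'a set)" by (rule card_mono) simp_all
    ultimately show ?thesis unfolding q_def by simp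
  qed
  have n2: "n \<ge> 2" using kn by simp
  obtain J where J1: "J \<subseteq> {1..n}" and Jsurj: "\<forall>w. \<exists>c\<in>C. \<forall>i\<in>J. c i = w i"
    and Jinj: "\<forall>c\<in>C. (\<forall>i\<in>J. c i = 0) \<longrightarrow> (\<forall>i. c i = 0)"
    using info_set[OF lin] by blast
  have finJ: "finite J" using J1 finite_subset by blast
  have "bij_betw (\<lambda>c i. if i \<in> J then c i else 0) C (words J)"
    unfolding bij_betw_def
  proof
    show "inj_on (\<lambda>c i. if i \<in> J then c i else 0) C"
    proof (rule inj_onI)
      fix c c' assume cc: "c \<in> C" "c' \<in> C"
        "(\<lambda>i. if i \<in> J then c i else 0) = (\<lambda>i. if i \<in> J then c' i else 0)"
      have "\<forall>i\<in>J. c i - c' i = 0" using cc(3) by (metis right_minus_eq)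
      then have "\<forall>i. c i - c' i = 0" using Jinj[rule_format, OF lc_diff[OF lin cc(1,2)]] by simp
      then show "c = c'" by (simp add: fun_eq_iff)
    qed
  next
    show "(\<lambda>c i. if i \<in> J then c i else 0) ` C = words J"
    proof
      show "(\<lambda>c i. if i \<in> J then c i else 0) ` C \<subseteq> words J" by (auto simp: words_def)
    next
      show "words J \<subseteq> (\<lambda>c i. if i \<in> J then c i else 0) ` C"
      proof
        fix w :: "nat \<Rightarrow> 'a" assume w: "w \<in> words J"
        obtain c where c: "c \<in> C" "\<forall>i\<in>J. c i = w i" using Jsurj by blast
        have "w = (\<lambda>i. if i \<in> J then c i else 0)" using w c(2) by (auto simp: words_def fun_eq_iff)
        then show "w \<in> (\<lambda>c i. if i \<in> J then c i else 0) ` C" using c(1) by blast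
      qed
    qed
  qed
  then have "card C = q ^ card J" using card_words[OF finJ] bij_betw_same_card q_def by metis
  then have kJ: "card J = k" using dim q2 q_def by (metis power_inject_exp less_le_trans one_less_numeral_iff semiring_norm(76))
  define T where "T = {1..n} - J"
  define r where "r = card T"
  have finT: "finite T" unfolding T_def by simp
  have r: "r = n - k" unfolding r_def T_def using J1 finJ kJ by (simp add: card_Diff_subset)
  have r2: "r \<ge> 2" using kn r by simp
  obtain e where e: "bij_betw e {0..<r} T" using ex_bij_betw_nat_finite[OF finT] r_def by blast
  have es: "\<And>s. s < r \<Longrightarrow> e s \<in> T" using e by (auto simp: bij_betw_def)
  have esn: "\<And>s. s < r \<Longrightarrow> e s \<in> {1..n} \<and> e s \<notin> J" using es T_def by auto
  have "\<forall>j. \<exists>c\<in>C. \<forall>i\<in>J. c i = (if i = j then 1 else 0)"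
  proof
    fix j show "\<exists>c\<in>C. \<forall>i\<in>J. c i = (if i = j then 1 else 0)"
      using spec[OF Jsurj, of "\<lambda>i. if i = j then 1 else 0"] by simp
  qed
  then have "\<forall>j. \<exists>c. c \<in> C \<and> (\<forall>i\<in>J. c i = (if i = j then 1 else 0))" by (simp add: Bex_def)
  from choice[OF this] obtain b where b0: "\<forall>j. b j \<in> C \<and> (\<forall>i\<in>J. b j i = (if i = j then 1 else 0))"
    by (elim exE)
  have b: "\<And>j. b j \<in> C" "\<And>j i. i \<in> J \<Longrightarrow> b j i = (if i = j then 1 else 0)"
    using b0 by simp_all
  define E where "E v = (\<lambda>i. \<Sum>j\<in>J. v j * b j i)" for v :: "nat \<Rightarrow> 'a"
  define H where "H s t = (if t = e s then 1 else 0) - (if t \<in> J then b t (e s) else 0)" for s t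
  define Hx where "Hx v s = (\<Sum>t\<in>{1..n}. H s t * v t)" for v :: "nat \<Rightarrow> 'a" and s
  have EC: "E v \<in> C" for v unfolding E_def by (rule lc_sum[OF lin]) (simp add: b(1))
  have EJ: "E v i = v i" if "i \<in> J" for v i
  proof -
    have "E v i = (\<Sum>j\<in>J. if i = j then v j else 0)" unfolding E_def using b(2)[OF that]
      by (intro sum.cong) auto
    also have "\<dots> = v i" using that finJ by simp
    finally show ?thesis .
  qed
  have HxE: "Hx v s = v (e s) - E v (e s)" if "s < r" for v s
  proof -
    have "Hx v s = (\<Sum>t\<in>{1..n}. (if t = e s then v t else 0)) - (\<Sum>t\<in>{1..n}. (if t \<in> J then b t (e s) * v t else 0))"
      unfolding Hx_def H_def sum_subtractf[symmetric] by (intro sum.cong) (auto simp: left_diff_distrib)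
    also have "\<dots> = v (e s) - (\<Sum>t\<in>{1..n} \<inter> J. b t (e s) * v t)"
      using esn[OF that] by (simp add: sum.inter_restrict)
    also have "{1..n} \<inter> J = J" using J1 by blast
    also have "v (e s) - (\<Sum>t\<in>J. b t (e s) * v t) = v (e s) - E v (e s)"
      unfolding E_def by (simp add: mult.commute)
    finally show ?thesis .
  qed
  have ker: "v \<in> C \<longleftrightarrow> (\<forall>s<r. Hx v s = 0)" if v: "v \<in> words {1..n}" for v
  proof
    assume vC: "v \<in> C"
    have d: "(\<lambda>i. v i - E v i) \<in> C" using lc_diff[OF lin vC EC] .
    have "(\<lambda>i. v i - E v i) i = 0" for i by (rule Jinj[rule_format, OF d]) (simp add: EJ)
    then have "\<forall>i. v i - E v i = 0" by simp
    then show "\<forall>s<r. Hx v s = 0" using HxE by simp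
  next
    assume h: "\<forall>s<r. Hx v s = 0"
    have "v = E v"
    proof
      fix i
      show "v i = E v i"
      proof (cases "i \<in> {1..n}")
        case False
        then have "v i = 0" using v by (simp add: words_def)
        moreover have "b j i = 0" for j using lc_words[OF lin b(1)[of j]] False
          by (simp add: words_def)
        then have "E v i = 0" unfolding E_def by simp
        ultimately show ?thesis by simp
      next
        case True
        show ?thesis
        proof (cases "i \<in> J")
          case True then show ?thesis using EJ by simp
        next
          case False
          then have "i \<in> T" using \<open>i \<in> {1..n}\<close> T_def by simp
          then obtain s where "s < r" "i = e s" using e by (auto simp: bij_betw_def)
          then show ?thesis using h HxE by force
        qed
      qed
    qed
    then show "v \<in> C" using EC by metis
  qed
  have Hx_add: "Hx (\<lambda>x. f x + g x) s = Hx f s + Hx g s" for f g s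
    unfolding Hx_def by (simp add: algebra_simps sum.distrib)
  have Hx_diff: "Hx (\<lambda>x. f x - g x) s = Hx f s - Hx g s" for f g s
    unfolding Hx_def by (simp add: algebra_simps sum_subtractf)
  have Hx_smult: "Hx (\<lambda>x. a * f x) s = a * Hx f s" for a f s
    unfolding Hx_def by (simp add: algebra_simps sum_distrib_left)
  have Hx_delta: "Hx (\<lambda>x. if x = i then 1 else 0) s = H s i" if "i \<in> {1..n}" for i s
    unfolding Hx_def using that by (simp add: if_distrib cong: if_cong)
  have wt1: False if "u \<in> C" "{x. u x \<noteq> 0} = {i}" for u i
  proof -
    have "u \<noteq> (\<lambda>_. 0)" using that(2) by auto
    moreover have "hdist u (\<lambda>_. 0) = 1" unfolding hdist_def using that(2) by simp
    ultimately show False using md lc_zero[OF lin] that(1) unfolding min_dist_eq_def by fastforce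
  qed
  have colnz: "\<exists>s<r. H s i \<noteq> 0" if i: "i \<in> {1..n}" for i
  proof -
    let ?d = "\<lambda>x. if x = i then 1 else (0::'a)"
    have "{x. ?d x \<noteq> 0} = {i}" by auto
    then have "?d \<notin> C" using wt1[of ?d i] by blast
    moreover have "?d \<in> words {1..n}" using i by (simp add: words_def)
    ultimately obtain s where "s < r" "Hx ?d s \<noteq> 0" using ker by blast
    then show ?thesis using Hx_delta[OF i] by auto
  qed
  define S where "S = (words {0..<r} :: (nat \<Rightarrow> 'a) set)"
  define P where "P = {1..n} \<times> (UNIV - {0::'a})"
  define \<phi> where "\<phi> p = (\<lambda>s. if s < r then snd p * H s (fst p) else 0)" for p :: "nat \<times> 'a"
  have \<phi>P: "\<phi> p \<in> S - {\<lambda>_. 0}" if pP: "p \<in> P" for p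
  proof -
    obtain i a where p: "p = (i,a)" "i \<in> {1..n}" "a \<noteq> 0" using pP P_def by auto
    obtain s where "s < r" "H s i \<noteq> 0" using colnz[OF p(2)] by blast
    then have "\<phi> p s \<noteq> 0" using p by (simp add: \<phi>_def)
    then have "\<phi> p \<noteq> (\<lambda>_. 0)" by auto
    moreover have "\<phi> p \<in> S" by (simp add: S_def words_def \<phi>_def)
    ultimately show ?thesis by simp
  qed
  have fiber: "card {p\<in>P. \<phi> p = \<sigma>} = na" if \<sigma>: "\<sigma> \<in> S - {\<lambda>_. 0}" for \<sigma>
  proof -
    define einv where "einv = the_inv_into {0..<r} e"
    have einv2: "einv (e s) = s" if "s < r" for s
      unfolding einv_def using that bij_betw_imp_inj_on[OF e] by (simp add: the_inv_into_f_f)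
    define v where "v = (\<lambda>i. if i \<in> T then \<sigma> (einv i) else 0)"
    have vw: "v \<in> words {1..n}" unfolding v_def words_def T_def by auto
    have Ev0: "E v i = 0" for i unfolding E_def v_def T_def by simp
    have Hxv: "Hx v s = \<sigma> s" if "s < r" for s
      using HxE[OF that, of v] Ev0 einv2[OF that] es[OF that] by (simp add: v_def)
    obtain s0 where s0: "\<sigma> s0 \<noteq> 0" using \<sigma> by (auto simp: fun_eq_iff)
    have s0r: "s0 < r" using \<sigma> s0 by (auto simp: S_def words_def)
    have vnC: "v \<notin> C" using ker[OF vw] Hxv[OF s0r] s0 s0r by auto
    have naeq: "card {c\<in>C. hdist v c = 1} = na" using na vw vnC by blast
    define \<psi> where "\<psi> p = (\<lambda>x. v x - snd p * (if x = fst p then 1 else 0))" for p :: "nat \<times> 'a"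
    have Hx\<psi>: "Hx (\<psi> (i,a)) s = Hx v s - a * H s i" if "i \<in> {1..n}" for i a s
      unfolding \<psi>_def using Hx_delta[OF that, of s] by (simp add: Hx_diff Hx_smult)
    have img: "{c\<in>C. hdist v c = 1} = \<psi> ` {p\<in>P. \<phi> p = \<sigma>}"
    proof (intro set_eqI iffI)
      fix c assume "c \<in> {c\<in>C. hdist v c = 1}"
      then have c: "c \<in> C" "card {x. v x \<noteq> c x} = 1" by (auto simp: hdist_def)
      then obtain i where i: "{x. v x \<noteq> c x} = {i}" using card_1_singletonE[OF c(2)] by metis
      have "i \<in> {x. v x \<noteq> c x}" unfolding i by simp
      then have vi: "v i \<noteq> c i" by simp
      define a where "a = v i - c i"
      have a: "a \<noteq> 0" using vi by (auto simp: a_def)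
      have "i \<in> {1..n}"
      proof (rule ccontr)
        assume "i \<notin> {1..n}"
        then have "v i = 0" "c i = 0" using vw lc_words[OF lin c(1)] by (auto simp: words_def)
        then show False using vi by auto
      qed
      note iin = this
      have cpsi: "c = \<psi> (i,a)"
      proof
        fix x show "c x = \<psi> (i,a) x"
        proof (cases "x = i")
          case True then show ?thesis by (simp add: \<psi>_def a_def)
        next
          case False then have "v x = c x" using i by auto
          then show ?thesis using False by (simp add: \<psi>_def)
        qed
      qed
      have "\<phi> (i,a) = \<sigma>"
      proof
        fix s show "\<phi> (i,a) s = \<sigma> s"
        proof (cases "s < r")
          case True
          have "Hx c s = 0" using ker[OF lc_words[OF lin c(1)]] c(1) True by blast
          then have "\<sigma> s - a * H s i = 0" using Hx\<psi>[OF iin, of a s] cpsi Hxv[OF True] by simp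
          then show ?thesis using True by (simp add: \<phi>_def)
        next
          case False then show ?thesis using \<sigma> by (simp add: \<phi>_def S_def words_def)
        qed
      qed
      moreover have "(i,a) \<in> P" using iin a by (simp add: P_def)
      ultimately show "c \<in> \<psi> ` {p\<in>P. \<phi> p = \<sigma>}" using cpsi by blast
    next
      fix c assume "c \<in> \<psi> ` {p\<in>P. \<phi> p = \<sigma>}"
      then obtain p where pp: "p \<in> P" "\<phi> p = \<sigma>" "c = \<psi> p" by blast
      obtain i a where pia: "p = (i,a)" by (cases p)
      then have p: "c = \<psi> (i,a)" "i \<in> {1..n}" "a \<noteq> 0" "\<phi> (i,a) = \<sigma>" using pp by (auto simp: P_def)
      have cw: "c \<in> words {1..n}" using vw p(1,2) by (auto simp: words_def \<psi>_def)
      have "Hx c s = 0" if "s < r" for s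
      proof -
        have "\<phi> (i,a) s = \<sigma> s" using p(4) by simp
        then have "a * H s i = \<sigma> s" using that by (simp add: \<phi>_def)
        then show ?thesis using Hx\<psi>[OF p(2), of a s] Hxv[OF that] p(1) by simp
      qed
      then have "c \<in> C" using ker[OF cw] by blast
      moreover have "{x. v x \<noteq> c x} = {i}" using p(1,3) by (auto simp: \<psi>_def)
      ultimately show "c \<in> {c\<in>C. hdist v c = 1}" by (simp add: hdist_def)
    qed
    have "inj_on \<psi> {p\<in>P. \<phi> p = \<sigma>}"
    proof (rule inj_onI)
      fix p p' assume pp: "p \<in> {p\<in>P. \<phi> p = \<sigma>}" "p' \<in> {p\<in>P. \<phi> p = \<sigma>}" "\<psi> p = \<psi> p'"
      obtain i a where p: "p = (i,a)" "a \<noteq> 0" using pp(1) by (cases p) (auto simp: P_def)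
      obtain i' a' where p': "p' = (i',a')" "a' \<noteq> 0" using pp(2) by (cases p') (auto simp: P_def)
      have "\<psi> p i = \<psi> p' i" using pp(3) by simp
      then have 1: "a = a' * (if i = i' then 1 else 0)" using p p' by (simp add: \<psi>_def)
      then have "i = i'" using p(2) by (auto split: if_splits)
      then show "p = p'" using 1 p p' by simp
    qed
    then have "card (\<psi> ` {p\<in>P. \<phi> p = \<sigma>}) = card {p\<in>P. \<phi> p = \<sigma>}" by (rule card_image)
    then show ?thesis using naeq img by simp
  qed
  have cardS: "card S = q ^ r" unfolding S_def q_def by (simp add: card_words)
  have finS: "finite S" using cardS q2 by (intro card_ge_0_finite) simp
  have zS: "(\<lambda>_. 0) \<in> S" by (simp add: S_def words_def)
  have cardS0: "card (S - {\<lambda>_. 0}) = q ^ r - 1" using cardS zS finS by (simp add: card_Diff_singleton)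
  have finP: "finite P" unfolding P_def by simp
  have cardP: "card P = n * (q - 1)" unfolding P_def q_def by (simp add: card_cartesian_product card_Diff_singleton)
  have Pun: "P = (\<Union>\<sigma>\<in>S - {\<lambda>_. 0}. {p\<in>P. \<phi> p = \<sigma>})" using \<phi>P by auto
  have "card P = (\<Sum>\<sigma>\<in>S - {\<lambda>_. 0}. card {p\<in>P. \<phi> p = \<sigma>})"
    by (subst Pun, rule card_UN_disjoint) (use finS finP in auto)
  also have "\<dots> = (\<Sum>\<sigma>\<in>S - {\<lambda>_. 0}. na)" using fiber by (intro sum.cong) auto
  also have "\<dots> = (q ^ r - 1) * na" using cardS0 by simp
  finally have cnt: "n * (q - 1) = (q ^ r - 1) * na" using cardP by simp
  have na0: "na > 0" using n2 nm by (cases "na = 0") auto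
  have eqm: "m * (q - 1) = q ^ r - 1" using cnt nm na0 by (simp add: mult.commute mult.left_commute)
  have qq: "q * q \<le> q ^ r"
  proof -
    have "q ^ 2 \<le> q ^ r" using r2 q2 by (intro power_increasing) auto
    then show ?thesis by (simp add: power2_eq_square)
  qed
  have m3: "m \<ge> 3"
  proof (rule ccontr)
    assume "\<not> m \<ge> 3"
    have "m > q"
    proof (rule ccontr)
      assume "\<not> m > q"
      then have "m * (q - 1) \<le> q * (q - 1)" by simp
      moreover have "q * (q - 1) + q = q * q" using q2
        by (metis add.commute le_add_diff_inverse2 le_trans mult.commute mult_Suc_right one_le_numeral plus_1_eq_Suc)
      ultimately show False using eqm qq q2 by linarith
    qed
    then show False using q2 \<open>\<not> m \<ge> 3\<close> by simp
  qed
  define I where "I = ii ` {1..m}"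
  have injii: "inj_on ii {1..m}"
  proof (rule inj_onI)
    fix j j' assume jj: "j \<in> {1..m}" "j' \<in> {1..m}" "ii j = ii j'"
    show "j = j'"
    proof (rule ccontr)
      assume "j \<noteq> j'"
      then have "X j \<inter> X j' = {}" using Xdisj jj by blast
      moreover have "ii j \<in> X j" using ii jj(1) by blast
      moreover have "ii j' \<in> X j'" using ii jj(2) by blast
      then have "ii j \<in> X j'" using jj(3) by simp
      ultimately show False by blast
    qed
  qed
  have cardI: "card I = m" unfolding I_def using injii by (simp add: card_image)
  have Isub: "I \<subseteq> {1..n}" unfolding I_def using ii Xsub by blast
  have finI: "finite I" unfolding I_def by simp
  have cardI': "card I = (CARD('a) ^ r - 1) div (CARD('a) - 1)"
  proof -
    have "(q ^ r - 1) div (q - 1) = m" using eqm[symmetric] q2 by simp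
    then show ?thesis using cardI q_def by simp
  qed
  have colI: "\<forall>j\<in>I. \<exists>s<r. H s j \<noteq> 0" using colnz Isub by blast
  have pairI: "\<forall>j\<in>I. \<forall>j'\<in>I. j \<noteq> j' \<longrightarrow> (\<forall>a b. (\<forall>s<r. a * H s j + b * H s j' = 0) \<longrightarrow> a = 0 \<and> b = 0)"
  proof (intro ballI impI allI)
    fix j j' a b assume jj: "j \<in> I" "j' \<in> I" "j \<noteq> j'" and h: "\<forall>s<r. a * H s j + b * H s j' = 0"
    have jn: "j \<in> {1..n}" "j' \<in> {1..n}" using jj Isub by auto
    define u where "u = (\<lambda>x. a * (if x = j then 1 else 0) + b * (if x = j' then 1 else 0))"
    have uw: "u \<in> words {1..n}" using jn by (auto simp: u_def words_def)
    have "Hx u s = a * H s j + b * H s j'" for s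
      unfolding u_def using Hx_delta[OF jn(1), of s] Hx_delta[OF jn(2), of s] by (simp add: Hx_add Hx_smult)
    then have uC: "u \<in> C" using ker[OF uw] h by simp
    show "a = 0 \<and> b = 0"
    proof (rule ccontr)
      assume nz: "\<not> (a = 0 \<and> b = 0)"
      consider "a \<noteq> 0" "b = 0" | "a = 0" "b \<noteq> 0" | "a \<noteq> 0" "b \<noteq> 0" using nz by blast
      then show False
      proof cases
        case 1 then have "{x. u x \<noteq> 0} = {j}" using jj(3) by (auto simp: u_def)
        then show False using wt1 uC by blast
      next
        case 2 then have "{x. u x \<noteq> 0} = {j'}" using jj(3) by (auto simp: u_def)
        then show False using wt1 uC by blast
      next
        case 3
        have su: "supp u = {j, j'}" using 3 jj(3) by (auto simp: u_def supp_def)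
        then have "wt u = 2" using jj(3) by (simp add: wt_def)
        then obtain l where l: "l \<in> {1..m}" "supp u \<subseteq> X l" using w2 uC by blast
        obtain l1 where l1: "l1 \<in> {1..m}" "j = ii l1" using jj(1) I_def by auto
        obtain l2 where l2: "l2 \<in> {1..m}" "j' = ii l2" using jj(2) I_def by auto
        have "l1 = l"
        proof (rule ccontr)
          assume "l1 \<noteq> l"
          then have "X l1 \<inter> X l = {}" using Xdisj l1 l by blast
          moreover have "j \<in> X l1" using ii l1 by auto
          moreover have "j \<in> X l" using l su by auto
          ultimately show False by blast
        qed
        moreover have "l2 = l"
        proof (rule ccontr)
          assume "l2 \<noteq> l"
          then have "X l2 \<inter> X l = {}" using Xdisj l2 l by blast
          moreover have "j' \<in> X l2" using ii l2 by auto
          moreover have "j' \<in> X l" using l su by auto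
          ultimately show False by blast
        qed
        ultimately show False using l1 l2 jj(3) by simp
      qed
    qed
  qed
  have sumI: "(\<Sum>t\<in>I. H s t * v t) = Hx v s" if "v \<in> words I" for v s
    unfolding Hx_def using that Isub by (intro sum.mono_neutral_left) (auto simp: words_def)
  have wI: "words I \<subseteq> words {1..n}" using Isub by (auto simp: words_def)
  have Deq: "{c \<in> C. supp c \<subseteq> I} = {v \<in> words I. \<forall>s<r. (\<Sum>t\<in>I. H s t * v t) = 0}"
  proof (intro set_eqI iffI)
    fix c assume "c \<in> {c \<in> C. supp c \<subseteq> I}"
    then have c: "c \<in> C" "c \<in> words I" by (auto simp: supp_def words_def)
    then have "\<forall>s<r. Hx c s = 0" using ker wI by blast
    then show "c \<in> {v \<in> words I. \<forall>s<r. (\<Sum>t\<in>I. H s t * v t) = 0}" using c sumI by simp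
  next
    fix c assume "c \<in> {v \<in> words I. \<forall>s<r. (\<Sum>t\<in>I. H s t * v t) = 0}"
    then have c: "c \<in> words I" "\<forall>s<r. (\<Sum>t\<in>I. H s t * c t) = 0" by auto
    then have "\<forall>s<r. Hx c s = 0" using sumI by simp
    then have "c \<in> C" using ker wI c(1) by blast
    then show "c \<in> {c \<in> C. supp c \<subseteq> I}" using c(1) by (auto simp: supp_def words_def)
  qed
  have "hamming_code I {c \<in> C. supp c \<subseteq> I}"
    unfolding hamming_code_def
    apply (rule conjI, rule finI)
    apply (rule exI[of _ r], rule conjI, rule r2, rule conjI, rule cardI')
    apply (rule exI[of _ H])
    apply (rule conjI, rule colI, rule conjI, rule pairI)
    by (rule Deq)
  then show ?thesis using m3 cardI unfolding I_def by simp
qed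

end
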